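(* Let $Y$ be a complete CAT$(0)$ space, let $C_1, C_2 \subseteq Y$ be nonempty, closed and convex, and let $r_1,r_2>0$. If there exists $z \in Y$ such that $C_1, C_2 \subseteq B(z,r_1)$, then for any $x \in B(z,r_2)$, \[d(P_{C_1}(x), P_{C_2}(x))^2 \le 2(r_1 + r_2)H(C_1,C_2).\]
   Context: A CAT$(0)$ space is a geodesic space in which every geodesic triangle is no fatter than its Euclidean comparison triangle. A subset is convex if it contains every geodesic segment joining two of its points. $B(z,r)$ is the closed ball. For nonempty closed convex $C$ in a complete CAT$(0)$ space, $P_C(x)$ denotes the unique point of $C$ nearest to $x$ (metric projection). $H(B,C)=\max\{\sup_{b\in B}\mathrm{dist}(b,C),\sup_{c\in C}\mathrm{dist}(c,B)\}$ is the Pompeiu–Hausdorff distance. *)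

theory Defs
  imports "HOL-Analysis.Analysis"
begin

definition geodesic_path :: "'a::metric_space \<Rightarrow> 'a \<Rightarrow> (real \<Rightarrow> 'a) \<Rightarrow> bool" where
  "geodesic_path x y g \<longleftrightarrow> g 0 = x \<and> g 1 = y \<and>
     (\<forall>s\<in>{0..1}. \<forall>t\<in>{0..1}. dist (g s) (g t) = \<bar>s - t\<bar> * dist x y)"

definition geodesic_space :: "'a::metric_space itself \<Rightarrow> bool" where
  "geodesic_space TYPE('a) \<longleftrightarrow> (\<forall>x y::'a. \<exists>g. geodesic_path x y g)"

text \<open>Linear parametrisation of the side [a,b] of a Euclidean triangle in the plane (complex numbers).\<close>
definition lin_path :: "complex \<Rightarrow> complex \<Rightarrow> real \<Rightarrow> complex" where
  "lin_path a b s = (1 - of_real s) * a + of_real s * b"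

definition tri_side :: "'b \<Rightarrow> 'b \<Rightarrow> 'b \<Rightarrow> nat \<Rightarrow> 'b" where
  "tri_side u v w i = (if i = 0 then u else if i = 1 then v else w)"

definition CAT0 :: "'a::metric_space itself \<Rightarrow> bool" where
  "CAT0 TYPE('a) \<longleftrightarrow> geodesic_space TYPE('a) \<and>
    (\<forall>(p::'a) q r g1 g2 g3 (a::complex) b c.
       geodesic_path p q g1 \<and> geodesic_path q r g2 \<and> geodesic_path r p g3 \<and>
       dist a b = dist p q \<and> dist b c = dist q r \<and> dist c a = dist r p \<longrightarrow>
       (\<forall>i<3. \<forall>j<3. \<forall>s\<in>{0..1}. \<forall>t\<in>{0..1}.
          dist (tri_side g1 g2 g3 i s) (tri_side g1 g2 g3 j t)
            \<le> dist (tri_side (lin_path a b) (lin_path b c) (lin_path c a) i s)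
                   (tri_side (lin_path a b) (lin_path b c) (lin_path c a) j t)))"

definition geo_convex :: "'a::metric_space set \<Rightarrow> bool" where
  "geo_convex C \<longleftrightarrow> (\<forall>x\<in>C. \<forall>y\<in>C. \<forall>g. geodesic_path x y g \<longrightarrow> g ` {0..1} \<subseteq> C)"

definition metric_proj :: "'a::metric_space set \<Rightarrow> 'a \<Rightarrow> 'a" where
  "metric_proj C x = (THE p. p \<in> C \<and> (\<forall>c\<in>C. dist x p \<le> dist x c))"

text \<open>Pompeiu--Hausdorff distance (used for nonempty bounded sets).\<close>
definition pompeiu_hausdorff :: "'a::metric_space set \<Rightarrow> 'a set \<Rightarrow> real" where
  "pompeiu_hausdorff B C = max (SUP b\<in>B. infdist b C) (SUP c\<in>C. infdist c B)"

end

theory Submission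
  imports Defs
begin


lemma norm_comb:
  fixes u v :: "'b::real_inner"
  shows "(norm ((1-t) *\<^sub>R u + t *\<^sub>R v))^2 = (1-t)*(norm u)^2 + t*(norm v)^2 - t*(1-t)*(norm (u-v))^2"
  unfolding power2_norm_eq_inner
  by (simp add: inner_add_left inner_add_right inner_diff_left inner_diff_right inner_commute algebra_simps)

lemma comparison_tri:
  fixes p q r :: "'a::metric_space"
  shows "\<exists>a b c::complex. dist a b = dist p q \<and> dist b c = dist q r \<and> dist c a = dist r p"
proof -
  define \<alpha> where "\<alpha> = dist p q"
  define \<beta> where "\<beta> = dist q r"
  define \<gamma> where "\<gamma> = dist r p"
  have t1: "\<beta> \<le> \<alpha> + \<gamma>" "\<alpha> \<le> \<beta> + \<gamma>" "\<gamma> \<le> \<alpha> + \<beta>"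
    unfolding \<alpha>_def \<beta>_def \<gamma>_def by (metis dist_commute dist_triangle add.commute)+
  have nn: "\<alpha> \<ge> 0" "\<beta> \<ge> 0" "\<gamma> \<ge> 0" unfolding \<alpha>_def \<beta>_def \<gamma>_def by auto
  show ?thesis
  proof (cases "\<alpha> = 0")
    case True
    then have "\<beta> = \<gamma>" using t1 by auto
    show ?thesis
      apply (rule exI[of _ 0], rule exI[of _ "of_real \<alpha>"], rule exI[of _ "of_real \<gamma>"])
      using True \<open>\<beta> = \<gamma>\<close> nn unfolding \<alpha>_def[symmetric] \<beta>_def[symmetric] \<gamma>_def[symmetric]
      by (simp add: dist_norm)
  next
    case False
    then have ap: "\<alpha> > 0" using nn by auto
    define u where "u = (\<alpha>^2 + \<gamma>^2 - \<beta>^2) / (2*\<alpha>)"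
    have ab1: "\<bar>\<alpha> - \<gamma>\<bar> \<le> \<beta>" using t1 by (simp add: abs_le_iff)
    have "(\<alpha> - \<gamma>)^2 \<le> \<beta>^2"
    proof -
      have "(\<alpha> - \<gamma>)^2 = \<bar>\<alpha> - \<gamma>\<bar>^2" by simp
      also have "\<dots> \<le> \<beta>^2" by (rule power_mono[OF ab1]) simp
      finally show ?thesis .
    qed
    moreover have "\<beta>^2 \<le> (\<alpha>+\<gamma>)^2" using t1 nn by (simp add: power_mono)
    ultimately have l1: "\<alpha>^2 + \<gamma>^2 - \<beta>^2 \<le> 2*\<alpha>*\<gamma>" and l2: "-(2*\<alpha>*\<gamma>) \<le> \<alpha>^2 + \<gamma>^2 - \<beta>^2"
      by (simp_all add: power2_diff power2_sum)
    have X: "(\<alpha>^2 + \<gamma>^2 - \<beta>^2)^2 \<le> (2*\<alpha>*\<gamma>)^2"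
    proof -
      have "\<bar>\<alpha>^2 + \<gamma>^2 - \<beta>^2\<bar> \<le> \<bar>2*\<alpha>*\<gamma>\<bar>" using l1 l2 nn by (simp add: abs_le_iff)
      then show ?thesis using abs_le_square_iff by blast
    qed
    have uu: "u^2 \<le> \<gamma>^2"
    proof -
      have "u^2 = (\<alpha>^2 + \<gamma>^2 - \<beta>^2)^2 / (2*\<alpha>)^2" unfolding u_def by (simp add: power_divide)
      also have "\<dots> \<le> (2*\<alpha>*\<gamma>)^2 / (2*\<alpha>)^2" using X by (simp add: divide_right_mono)
      also have "\<dots> = \<gamma>^2" using ap by (simp add: power_mult_distrib)
      finally show ?thesis .
    qed
    define v where "v = sqrt (\<gamma>^2 - u^2)"
    have v2: "v^2 = \<gamma>^2 - u^2" unfolding v_def using uu by simp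
    have e1: "cmod (Complex u v) = \<gamma>" using v2 nn by (simp add: complex_norm)
    have "(u - \<alpha>)^2 + v^2 = \<beta>^2"
      using v2 ap unfolding u_def by (simp add: power2_eq_square field_simps)
    then have "(\<alpha> - u)^2 + (-v)^2 = \<beta>^2" by (simp add: power2_commute)
    then have e2: "cmod (Complex \<alpha> 0 - Complex u v) = \<beta>"
    proof -
      assume h: "(\<alpha> - u)^2 + (-v)^2 = \<beta>^2"
      have "Complex \<alpha> 0 - Complex u v = Complex (\<alpha> - u) (-v)" by (simp add: complex_eq_iff)
      then have "cmod (Complex \<alpha> 0 - Complex u v) = sqrt ((\<alpha> - u)^2 + (-v)^2)" by (simp only: complex_norm)
      also have "\<dots> = \<beta>" using h nn by simp
      finally show ?thesis .
    qed
    have e3: "cmod (Complex \<alpha> 0) = \<alpha>" using nn by (simp add: complex_norm)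
    show ?thesis
      apply (rule exI[of _ 0], rule exI[of _ "of_real \<alpha>"], rule exI[of _ "Complex u v"])
      using e1 e2 e3 nn unfolding \<alpha>_def[symmetric] \<beta>_def[symmetric] \<gamma>_def[symmetric]
      by (simp add: dist_norm norm_minus_commute complex_of_real_def)
  qed
qed

lemma tri_side_simps[simp]: "tri_side u v w 0 = u" "tri_side u v w 1 = v" "tri_side u v w 2 = w"
  by (simp_all add: tri_side_def)

lemma cat0_geod: "CAT0 TYPE('a::metric_space) \<Longrightarrow> \<exists>g. geodesic_path (x::'a) y g"
  unfolding CAT0_def geodesic_space_def by blast

lemma cat0_cmp:
  fixes p q r :: "'a::metric_space" and a b c :: complex
  assumes "CAT0 TYPE('a)" "geodesic_path p q g1" "geodesic_path q r g2" "geodesic_path r p g3"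
    "dist a b = dist p q" "dist b c = dist q r" "dist c a = dist r p"
    "i < 3" "j < 3" "s \<in> {0..1}" "t \<in> {0..1}"
  shows "dist (tri_side g1 g2 g3 i s) (tri_side g1 g2 g3 j t)
            \<le> dist (tri_side (lin_path a b) (lin_path b c) (lin_path c a) i s)
                   (tri_side (lin_path a b) (lin_path b c) (lin_path c a) j t)"
  using assms unfolding CAT0_def by blast

lemma geod_dist: "geodesic_path p q g \<Longrightarrow> s \<in> {0..1} \<Longrightarrow> t \<in> {0..1} \<Longrightarrow> dist (g s) (g t) = \<bar>s - t\<bar> * dist p q"
  unfolding geodesic_path_def by blast

lemma geod_ends: "geodesic_path p q g \<Longrightarrow> g 0 = p \<and> g 1 = q"
  unfolding geodesic_path_def by blast

lemma cn_ineq: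
  fixes p q x :: "'a::metric_space"
  assumes cat: "CAT0 TYPE('a)" and g: "geodesic_path p q g" and t: "0 \<le> t" "t \<le> 1"
  shows "(dist x (g t))^2 \<le> (1-t)*(dist x p)^2 + t*(dist x q)^2 - t*(1-t)*(dist p q)^2"
proof -
  obtain g2 where g2: "geodesic_path q x g2" using cat0_geod[OF cat] by blast
  obtain g3 where g3: "geodesic_path x p g3" using cat0_geod[OF cat] by blast
  obtain a b c :: complex where abc: "dist a b = dist p q" "dist b c = dist q x" "dist c a = dist x p"
    using comparison_tri by blast
  have "dist (tri_side g g2 g3 0 t) (tri_side g g2 g3 2 0)
          \<le> dist (tri_side (lin_path a b) (lin_path b c) (lin_path c a) 0 t)
                 (tri_side (lin_path a b) (lin_path b c) (lin_path c a) 2 0)"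
    by (rule cat0_cmp[OF cat g g2 g3 abc]) (use t in auto)
  then have le: "dist (g t) x \<le> dist (lin_path a b t) c"
    using geod_ends[OF g3] by (simp add: lin_path_def)
  have "lin_path a b t - c = (1-t) *\<^sub>R (a - c) + t *\<^sub>R (b - c)"
    by (simp add: lin_path_def scaleR_conv_of_real algebra_simps)
  then have "(dist (lin_path a b t) c)^2 = (1-t)*(norm (a-c))^2 + t*(norm (b-c))^2 - t*(1-t)*(norm ((a-c)-(b-c)))^2"
    by (simp add: dist_norm norm_comb)
  also have "\<dots> = (1-t)*(dist x p)^2 + t*(dist x q)^2 - t*(1-t)*(dist p q)^2"
    using abc by (simp add: dist_norm norm_minus_commute dist_commute)
  finally have eq: "(dist (lin_path a b t) c)^2 = (1-t)*(dist x p)^2 + t*(dist x q)^2 - t*(1-t)*(dist p q)^2" .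
  have "(dist x (g t))^2 \<le> (dist (lin_path a b t) c)^2"
    using le by (simp add: dist_commute power_mono)
  then show ?thesis using eq by simp
qed

lemma busemann:
  fixes p q r :: "'a::metric_space"
  assumes cat: "CAT0 TYPE('a)" and g1: "geodesic_path p q g1" and g3: "geodesic_path r p g3"
    and t: "0 \<le> t" "t \<le> 1"
  shows "dist (g1 t) (g3 (1-t)) \<le> t * dist q r"
proof -
  obtain g2 where g2: "geodesic_path q r g2" using cat0_geod[OF cat] by blast
  obtain a b c :: complex where abc: "dist a b = dist p q" "dist b c = dist q r" "dist c a = dist r p"
    using comparison_tri by blast
  have "dist (tri_side g1 g2 g3 0 t) (tri_side g1 g2 g3 2 (1-t))
          \<le> dist (tri_side (lin_path a b) (lin_path b c) (lin_path c a) 0 t)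
                 (tri_side (lin_path a b) (lin_path b c) (lin_path c a) 2 (1-t))"
    by (rule cat0_cmp[OF cat g1 g2 g3 abc]) (use t in auto)
  then have le: "dist (g1 t) (g3 (1-t)) \<le> dist (lin_path a b t) (lin_path c a (1-t))" by simp
  have "lin_path a b t - lin_path c a (1-t) = of_real t * (b - c)"
    by (simp add: lin_path_def algebra_simps)
  then have "dist (lin_path a b t) (lin_path c a (1-t)) = t * dist b c"
    using t by (simp add: dist_norm norm_mult)
  then show ?thesis using le abc by simp
qed

lemma geo_convex_mem: "geo_convex C \<Longrightarrow> x \<in> C \<Longrightarrow> y \<in> C \<Longrightarrow> geodesic_path x y g \<Longrightarrow> 0 \<le> s \<Longrightarrow> s \<le> 1 \<Longrightarrow> g s \<in> C"
proof -
  assume a: "geo_convex C" "x \<in> C" "y \<in> C" "geodesic_path x y g" "0 \<le> s" "s \<le> 1"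
  then have "g ` {0..1} \<subseteq> C" unfolding geo_convex_def by blast
  then show "g s \<in> C" using a by auto
qed

lemma small_t:
  fixes A B C e :: real
  assumes "e > 0" "C \<ge> 0" "\<And>t. 0 < t \<Longrightarrow> t \<le> e \<Longrightarrow> A \<le> B + t*C"
  shows "A \<le> B"
proof (rule ccontr)
  assume "\<not> A \<le> B"
  define t where "t = min e ((A - B) / (2*(C+1)))"
  have tp: "t > 0" using assms(1,2) \<open>\<not> A \<le> B\<close> unfolding t_def by auto
  have "t \<le> (A - B) / (2*(C+1))" unfolding t_def by simp
  then have "t * (2*(C+1)) \<le> A - B" using assms(2) by (simp add: le_divide_eq)
  moreover have "A \<le> B + t*C" using assms(3)[OF tp] unfolding t_def by simp
  moreover have "t*C \<ge> 0" using tp assms(2) by simp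
  moreover have "t*(2*(C+1)) = 2*(t*C) + 2*t" by (simp add: algebra_simps)
  ultimately show False using tp by linarith
qed

lemma proj_ineq:
  fixes x y p q :: "'a::metric_space"
  assumes cat: "CAT0 TYPE('a)" and conv: "geo_convex C" and pC: "p \<in> C"
    and near: "\<forall>c\<in>C. dist x p \<le> dist x c" and qC: "q \<in> C"
  shows "(dist p y)^2 \<le> (dist x y)^2 - (dist x p)^2 + 2 * dist x p * dist y q"
proof -
  define a where "a = dist x p"
  define b where "b = dist x y"
  define D where "D = dist p y"
  define h where "h = dist y q"
  have a0: "a \<ge> 0" and h0: "h \<ge> 0" unfolding a_def h_def by auto
  obtain g1 where g1: "geodesic_path p y g1" using cat0_geod[OF cat] by blast
  obtain g3 where g3: "geodesic_path q p g3" using cat0_geod[OF cat] by blast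
  have key: "D^2 \<le> b^2 - a^2 + 2*a*h + t*D^2" if t: "0 < t" "t \<le> 1" "t*h \<le> a" for t
  proof -
    have inC: "g3 (1-t) \<in> C" using geo_convex_mem[OF conv qC pC g3] t by auto
    have "a \<le> dist x (g3 (1-t))" unfolding a_def using near inC by blast
    also have "\<dots> \<le> dist x (g1 t) + dist (g1 t) (g3 (1-t))" by (rule dist_triangle)
    also have "\<dots> \<le> dist x (g1 t) + t*h"
      using busemann[OF cat g1 g3] t unfolding h_def by (simp add: dist_commute)
    finally have "a - t*h \<le> dist x (g1 t)" by simp
    then have "(a - t*h)^2 \<le> (dist x (g1 t))^2" using t by (simp add: power_mono)
    also have "\<dots> \<le> (1-t)*a^2 + t*b^2 - t*(1-t)*D^2"
      using cn_ineq[OF cat g1, of t x] t unfolding a_def b_def D_def by simp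
    finally have I: "(a - t*h)^2 \<le> (1-t)*a^2 + t*b^2 - t*(1-t)*D^2" .
    have "t * D^2 \<le> t * (b^2 - a^2 + 2*a*h + t*D^2 - t*h^2)"
      using I by (simp add: power2_eq_square algebra_simps)
    then have "D^2 \<le> b^2 - a^2 + 2*a*h + t*D^2 - t*h^2" using t by simp
    then show ?thesis using t by (smt (verit) mult_nonneg_nonneg zero_le_power2)
  qed
  have "D^2 \<le> b^2 - a^2 + 2*a*h"
  proof (cases "a = 0")
    case True
    then have "p = x" unfolding a_def by simp
    then show ?thesis using True unfolding D_def b_def by simp
  next
    case False
    then have ap: "a > 0" using a0 by simp
    define e where "e = (if h = 0 then 1 else min 1 (a/h))"
    have ep: "e > 0" unfolding e_def using ap h0 by auto
    show ?thesis
    proof (rule small_t[OF ep, of "D^2"])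
      fix t assume t: "0 < t" "t \<le> e"
      have "t \<le> 1" using t unfolding e_def by (auto split: if_splits)
      moreover have "t*h \<le> a"
      proof (cases "h = 0")
        case True then show ?thesis using a0 by simp
      next
        case False
        then have "t \<le> a/h" using t unfolding e_def by simp
        then show ?thesis using False h0 by (simp add: le_divide_eq mult.commute)
      qed
      ultimately show "D^2 \<le> b^2 - a^2 + 2*a*h + t*D^2" using key t by simp
    qed simp
  qed
  then show ?thesis unfolding a_def b_def D_def h_def .
qed

lemma mid_ineq:
  fixes x c c' :: "'a::metric_space"
  assumes cat: "CAT0 TYPE('a)" and conv: "geo_convex C" and cC: "c \<in> C" and c'C: "c' \<in> C"
    and low: "\<forall>y\<in>C. \<delta> \<le> dist x y" and d0: "\<delta> \<ge> 0"
  shows "(dist c c')^2 \<le> 2*(dist x c)^2 + 2*(dist x c')^2 - 4*\<delta>^2"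
proof -
  obtain g where g: "geodesic_path c c' g" using cat0_geod[OF cat] by blast
  have mC: "g (1/2) \<in> C" using geo_convex_mem[OF conv cC c'C g] by simp
  have "\<delta> \<le> dist x (g (1/2))" using low mC by blast
  then have "\<delta>^2 \<le> (dist x (g (1/2)))^2" using d0 by (simp add: power_mono)
  also have "\<dots> \<le> (1-1/2)*(dist x c)^2 + (1/2)*(dist x c')^2 - (1/2)*(1-1/2)*(dist c c')^2"
    by (rule cn_ineq[OF cat g]) auto
  finally show ?thesis by simp
qed

lemma proj_exists:
  fixes C :: "'a::complete_space set"
  assumes cat: "CAT0 TYPE('a)" and conv: "geo_convex C" and cl: "closed C" and ne: "C \<noteq> {}"
  shows "\<exists>p\<in>C. \<forall>c\<in>C. dist x p \<le> dist x c"
proof -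
  define \<delta> where "\<delta> = infdist x C"
  have d0: "\<delta> \<ge> 0" unfolding \<delta>_def by (rule infdist_nonneg)
  have low: "\<forall>y\<in>C. \<delta> \<le> dist x y" unfolding \<delta>_def using infdist_le by blast
  have "\<exists>c\<in>C. dist x c < \<delta> + inverse (real (Suc n))" for n
  proof -
    have bdd: "bdd_below ((\<lambda>a. dist x a) ` C)" by (rule bdd_belowI[of _ 0]) auto
    have "(INF a\<in>C. dist x a) < \<delta> + inverse (real (Suc n))"
      using infdist_notempty[OF ne, of x] unfolding \<delta>_def by simp
    then show ?thesis using cINF_less_iff[OF ne bdd] by blast
  qed
  then obtain s where s: "\<And>n. s n \<in> C" "\<And>n. dist x (s n) < \<delta> + inverse (real (Suc n))"
    by metis
  have cau: "Cauchy s"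
  proof (rule metric_CauchyI)
    fix e :: real assume e: "e > 0"
    define \<eta> where "\<eta> = min 1 (e^2 / (8*\<delta> + 5))"
    have \<eta>p: "\<eta> > 0" unfolding \<eta>_def using e d0 by auto
    obtain N where N: "inverse (real (Suc N)) < \<eta>" using reals_Archimedean[OF \<eta>p] by blast
    have "\<forall>m\<ge>N. \<forall>n\<ge>N. dist (s m) (s n) < e"
    proof (intro allI impI)
      fix m n assume mn: "m \<ge> N" "n \<ge> N"
      have b: "dist x (s k) < \<delta> + \<eta>" if "k \<ge> N" for k
      proof -
        have "inverse (real (Suc k)) \<le> inverse (real (Suc N))" using that by (simp add: le_imp_inverse_le)
        then show ?thesis using s(2)[of k] N by linarith
      qed
      have sq: "(dist x (s k))^2 \<le> (\<delta> + \<eta>)^2" if "k \<ge> N" for k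
        using b[OF that] by (simp add: power_mono less_imp_le)
      have "(dist (s m) (s n))^2 \<le> 2*(dist x (s m))^2 + 2*(dist x (s n))^2 - 4*\<delta>^2"
        by (rule mid_ineq[OF cat conv s(1) s(1) low d0])
      also have "\<dots> \<le> 4*(\<delta> + \<eta>)^2 - 4*\<delta>^2" using sq[OF mn(1)] sq[OF mn(2)] by simp
      also have "\<dots> = 8*\<delta>*\<eta> + 4*\<eta>^2" by (simp add: power2_sum)
      also have "\<dots> \<le> (8*\<delta> + 4)*\<eta>"
      proof -
        have "\<eta> \<le> 1" unfolding \<eta>_def by simp
        then have "\<eta>*\<eta> \<le> \<eta>*1" using \<eta>p by (intro mult_left_mono) auto
        then have "\<eta>^2 \<le> \<eta>" by (simp add: power2_eq_square)
        then show ?thesis by (simp add: algebra_simps)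
      qed
      also have "\<dots> < e^2"
      proof -
        have "\<eta> \<le> e^2 / (8*\<delta> + 5)" unfolding \<eta>_def by simp
        then have "\<eta> * (8*\<delta> + 5) \<le> e^2" using d0 by (simp add: le_divide_eq)
        then show ?thesis using \<eta>p by (simp add: algebra_simps)
      qed
      finally show "dist (s m) (s n) < e" using e by (simp add: power_less_imp_less_base)
    qed
    then show "\<exists>M. \<forall>m\<ge>M. \<forall>n\<ge>M. dist (s m) (s n) < e" by blast
  qed
  then obtain l where l: "s \<longlonglongrightarrow> l" using Cauchy_convergent_iff convergent_def by blast
  have lC: "l \<in> C" using cl l s(1) closed_sequentially by blast
  have lim1: "(\<lambda>n. dist x (s n)) \<longlonglongrightarrow> dist x l" by (intro tendsto_intros l)
  have lim2: "(\<lambda>n. \<delta> + inverse (real (Suc n))) \<longlonglongrightarrow> \<delta> + 0"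
    by (intro tendsto_intros LIMSEQ_inverse_real_of_nat)
  have "dist x l \<le> \<delta> + 0"
    by (rule LIMSEQ_le[OF lim1 lim2]) (use s(2) less_imp_le in blast)
  then have dl: "dist x l \<le> \<delta>" by simp
  show ?thesis
  proof (rule bexI[OF _ lC], intro ballI)
    fix c assume "c \<in> C"
    then have "\<delta> \<le> dist x c" using low by blast
    then show "dist x l \<le> dist x c" using dl by linarith
  qed
qed

lemma proj_unique:
  fixes x p p' :: "'a::metric_space"
  assumes cat: "CAT0 TYPE('a)" and conv: "geo_convex C"
    and p: "p \<in> C" "\<forall>c\<in>C. dist x p \<le> dist x c"
    and p': "p' \<in> C" "\<forall>c\<in>C. dist x p' \<le> dist x c"
  shows "p = p'"
proof -
  have eq: "dist x p = dist x p'" using p p' by (meson order_antisym)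
  have "(dist p p')^2 \<le> 2*(dist x p)^2 + 2*(dist x p')^2 - 4*(dist x p)^2"
    by (rule mid_ineq[OF cat conv p(1) p'(1) p(2)]) simp
  then have "(dist p p')^2 \<le> 0" using eq by simp
  then show ?thesis by simp
qed

lemma metric_proj_prop:
  fixes C :: "'a::complete_space set"
  assumes cat: "CAT0 TYPE('a)" and conv: "geo_convex C" and cl: "closed C" and ne: "C \<noteq> {}"
  shows "metric_proj C x \<in> C \<and> (\<forall>c\<in>C. dist x (metric_proj C x) \<le> dist x c)"
proof -
  have "\<exists>!p. p \<in> C \<and> (\<forall>c\<in>C. dist x p \<le> dist x c)"
    using proj_exists[OF cat conv cl ne, of x] proj_unique[OF cat conv] by blast
  then show ?thesis unfolding metric_proj_def by (rule theI')
qed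

lemma proj_bound:
  fixes C1 C2 :: "'a::complete_space set"
  assumes cat: "CAT0 TYPE('a)" and conv: "geo_convex C1" and p1: "p1 \<in> C1" "\<forall>c\<in>C1. dist x p1 \<le> dist x c"
    and ne: "C1 \<noteq> {}"
  shows "(dist p1 p2)^2 \<le> (dist x p2)^2 - (dist x p1)^2 + 2 * dist x p1 * infdist p2 C1"
proof -
  have a0: "dist x p1 \<ge> 0" by simp
  show ?thesis
  proof (rule small_t[of 1 "2 * dist x p1"])
    fix e :: real assume e: "0 < e" "e \<le> 1"
    have bdd: "bdd_below ((\<lambda>a. dist p2 a) ` C1)" by (rule bdd_belowI[of _ 0]) auto
    have "(INF a\<in>C1. dist p2 a) < infdist p2 C1 + e"
      using infdist_notempty[OF ne, of p2] e by simp
    then obtain q where q: "q \<in> C1" "dist p2 q < infdist p2 C1 + e" using cINF_less_iff[OF ne bdd] by blast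
    have "(dist p1 p2)^2 \<le> (dist x p2)^2 - (dist x p1)^2 + 2 * dist x p1 * dist p2 q"
      by (rule proj_ineq[OF cat conv p1 q(1)])
    also have "\<dots> \<le> (dist x p2)^2 - (dist x p1)^2 + 2 * dist x p1 * (infdist p2 C1 + e)"
      using q(2) a0 by (simp add: mult_left_mono less_imp_le)
    finally show "(dist p1 p2)^2 \<le> (dist x p2)^2 - (dist x p1)^2 + 2 * dist x p1 * infdist p2 C1 + e * (2 * dist x p1)"
      by (simp add: algebra_simps)
  qed auto
qed

theorem lemma4p2:
  fixes C1 C2 :: "'a::complete_space set" and r1 r2 :: real and z x :: 'a
  assumes "CAT0 TYPE('a)"
    and "C1 \<noteq> {}" "closed C1" "geo_convex C1"
    and "C2 \<noteq> {}" "closed C2" "geo_convex C2"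
    and "r1 > 0" "r2 > 0"
    and "C1 \<subseteq> cball z r1" "C2 \<subseteq> cball z r1"
    and "x \<in> cball z r2"
  shows "(dist (metric_proj C1 x) (metric_proj C2 x))\<^sup>2 \<le> 2 * (r1 + r2) * pompeiu_hausdorff C1 C2"
proof -
  note cat = assms(1)
  define p1 where "p1 = metric_proj C1 x"
  define p2 where "p2 = metric_proj C2 x"
  have P1: "p1 \<in> C1" "\<forall>c\<in>C1. dist x p1 \<le> dist x c"
    using metric_proj_prop[OF cat assms(4,3,2)] unfolding p1_def by auto
  have P2: "p2 \<in> C2" "\<forall>c\<in>C2. dist x p2 \<le> dist x c"
    using metric_proj_prop[OF cat assms(7,6,5)] unfolding p2_def by auto
  define H where "H = pompeiu_hausdorff C1 C2"
  have bdd1: "bdd_above ((\<lambda>b. infdist b C2) ` C1)"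
  proof (rule bdd_aboveI[of _ "2*r1"])
    fix y assume "y \<in> (\<lambda>b. infdist b C2) ` C1"
    then obtain b where b: "b \<in> C1" "y = infdist b C2" by blast
    have "infdist b C2 \<le> dist b p2" using P2(1) by (rule infdist_le)
    also have "\<dots> \<le> dist b z + dist z p2" by (rule dist_triangle)
    also have "\<dots> \<le> 2*r1"
    proof -
      have "dist z b \<le> r1" "dist z p2 \<le> r1" using b(1) P2(1) assms(10,11) by auto
      then show ?thesis by (simp add: dist_commute)
    qed
    finally show "y \<le> 2*r1" using b by simp
  qed
  have bdd2: "bdd_above ((\<lambda>b. infdist b C1) ` C2)"
  proof (rule bdd_aboveI[of _ "2*r1"])
    fix y assume "y \<in> (\<lambda>b. infdist b C1) ` C2"
    then obtain b where b: "b \<in> C2" "y = infdist b C1" by blast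
    have "infdist b C1 \<le> dist b p1" using P1(1) by (rule infdist_le)
    also have "\<dots> \<le> dist b z + dist z p1" by (rule dist_triangle)
    also have "\<dots> \<le> 2*r1"
    proof -
      have "dist z b \<le> r1" "dist z p1 \<le> r1" using b(1) P1(1) assms(10,11) by auto
      then show ?thesis by (simp add: dist_commute)
    qed
    finally show "y \<le> 2*r1" using b by simp
  qed
  have h1: "infdist p1 C2 \<le> H"
  proof -
    have "infdist p1 C2 \<le> (SUP b\<in>C1. infdist b C2)" by (rule cSUP_upper[OF P1(1) bdd1])
    then show ?thesis unfolding H_def pompeiu_hausdorff_def by simp
  qed
  have h2: "infdist p2 C1 \<le> H"
  proof -
    have "infdist p2 C1 \<le> (SUP c\<in>C2. infdist c C1)" by (rule cSUP_upper[OF P2(1) bdd2])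
    then show ?thesis unfolding H_def pompeiu_hausdorff_def by simp
  qed
  have H0: "H \<ge> 0" using h1 infdist_nonneg[of p1 C2] by linarith
  define a where "a = dist x p1"
  define b where "b = dist x p2"
  define D where "D = dist p1 p2"
  have a0: "a \<ge> 0" "b \<ge> 0" unfolding a_def b_def by auto
  have ar: "a \<le> r1 + r2"
  proof -
    have "a \<le> dist x z + dist z p1" unfolding a_def by (rule dist_triangle)
    moreover have "dist z x \<le> r2" using assms(12) by simp
    moreover have "dist z p1 \<le> r1" using assms(10) P1(1) by auto
    ultimately show ?thesis by (simp add: dist_commute)
  qed
  have br: "b \<le> r1 + r2"
  proof -
    have "b \<le> dist x z + dist z p2" unfolding b_def by (rule dist_triangle)
    moreover have "dist z x \<le> r2" using assms(12) by simp
    moreover have "dist z p2 \<le> r1" using assms(11) P2(1) by auto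
    ultimately show ?thesis by (simp add: dist_commute)
  qed
  have i1: "D^2 \<le> b^2 - a^2 + 2*a*infdist p2 C1"
    using proj_bound[OF cat assms(4) P1 assms(2), of p2] unfolding a_def b_def D_def .
  have i2: "D^2 \<le> a^2 - b^2 + 2*b*infdist p1 C2"
    using proj_bound[OF cat assms(7) P2 assms(5), of p1] unfolding a_def b_def D_def
    by (simp add: dist_commute)
  have "2*a*infdist p2 C1 \<le> 2*a*H" using h2 a0 by (simp add: mult_left_mono)
  moreover have "2*b*infdist p1 C2 \<le> 2*b*H" using h1 a0 by (simp add: mult_left_mono)
  moreover have "(a + b) * H = a*H + b*H" by (simp add: distrib_right)
  ultimately have "D^2 \<le> (a + b) * H" using i1 i2 by linarith
  also have "\<dots> \<le> 2*(r1+r2)*H" using ar br H0 by (intro mult_right_mono) auto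
  finally show ?thesis unfolding D_def p1_def p2_def H_def .
qed

end
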